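(* For all integers $k\ge1$ and generic $a,b,c$, the polynomials $Q_k^{(2)}(n;a;b,c)=\sum_{j=0}^k\frac{(-n)_j(n+a)_j(-k)_j}{j!(b)_j(c)_j}$ satisfy $$abc\,\frac{n+\frac a2}{\frac a2}\,Q_k^{(2)}(n;a;b,c)=(n+a)(n+b)(n+c)\,Q_{k-1}^{(2)}(n;a+1;b+1,c+1)+n(n+a-b)(n+a-c)\,Q_{k-1}^{(2)}(n-1;a+1;b+1,c+1).$$
   Context: $(c)_n$ denotes the Pochhammer symbol, $(c)_0=1$. *)

theory Defs
  imports Complex_Main
begin

definition Q2 :: "nat \<Rightarrow> complex \<Rightarrow> complex \<Rightarrow> complex \<Rightarrow> complex \<Rightarrow> complex" where
  "Q2 k n a b c = (\<Sum>j=0..k. pochhammer (-n) j * pochhammer (n + a) j * pochhammer (- of_nat k) j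
        / (fact j * pochhammer b j * pochhammer c j))"

end

theory Submission
  imports Defs
begin

lemma key_step:
  fixes k j :: nat and n a b c :: complex
  assumes k: "k \<ge> 1"
    and b: "\<And>m::nat. b \<noteq> - of_nat m"
    and c: "\<And>m::nat. c \<noteq> - of_nat m"
  defines "t \<equiv> \<lambda>j. pochhammer (-n) j * pochhammer (n + a) j * pochhammer (- of_nat k) j
        / (fact j * pochhammer b j * pochhammer c j)"
  defines "G \<equiv> \<lambda>j. - (of_nat j) * (2*n+a) * b * c * t j / of_nat k"
  shows "(2*n+a)*b*c* t j
     - (n + a) * (n + b) * (n + c) * (pochhammer (-n) j * pochhammer (n + (a+1)) j * pochhammer (- of_nat (k-1)) j
        / (fact j * pochhammer (b+1) j * pochhammer (c+1) j))
     - n * (n + a - b) * (n + a - c) * (pochhammer (-(n-1)) j * pochhammer (n - 1 + (a+1)) j * pochhammer (- of_nat (k-1)) j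
        / (fact j * pochhammer (b+1) j * pochhammer (c+1) j))
     = G (Suc j) - G j"
proof -
  have kk: "(of_nat k :: complex) \<noteq> 0" using k by simp
  have b0: "b \<noteq> 0" using b[of 0] by simp
  have c0: "c \<noteq> 0" using c[of 0] by simp
  have bj: "b + of_nat j \<noteq> 0" using b[of j] by (auto simp: eq_neg_iff_add_eq_0)
  have cj: "c + of_nat j \<noteq> 0" using c[of j] by (auto simp: eq_neg_iff_add_eq_0)
  have pb: "pochhammer b j \<noteq> 0" using b by (auto simp: pochhammer_eq_0_iff)
  have pc: "pochhammer c j \<noteq> 0" using c by (auto simp: pochhammer_eq_0_iff)
  have f0: "(fact j :: complex) \<noteq> 0" by simp
  have j1: "(of_nat j + 1 :: complex) \<noteq> 0" by (metis of_nat_Suc of_nat_eq_0_iff nat.distinct(1) add.commute)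
  have Z: "pochhammer (- of_nat (k-1)) j = - pochhammer (- of_nat k) j * (of_nat j - of_nat k) / (of_nat k :: complex)"
  proof -
    have "pochhammer (- of_nat k) (Suc j) = (- of_nat k :: complex) * pochhammer (- of_nat k + 1) j"
      by (rule pochhammer_rec)
    moreover have "- of_nat k + 1 = (- of_nat (k-1) :: complex)" using k by (simp add: of_nat_diff)
    moreover have "pochhammer (- of_nat k) (Suc j) = (- of_nat k + of_nat j :: complex) * pochhammer (- of_nat k) j"
      by (rule pochhammer_rec')
    ultimately show ?thesis using kk by (simp add: field_simps)
  qed
  have X: "(n+a) * pochhammer (n + (a+1)) j = (n + a + of_nat j) * pochhammer (n+a) j"
    using pochhammer_rec[of "n+a" j] pochhammer_rec'[of "n+a" j] by (simp add: add.assoc)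
  have Y: "n * pochhammer (-(n-1)) j = - ((-n + of_nat j) * pochhammer (-n) j)"
  proof -
    have h: "(-n + of_nat j) * pochhammer (-n) j = - (n * pochhammer (-(n-1)) j)"
      using pochhammer_rec[of "-n" j] pochhammer_rec'[of "-n" j] by simp
    show ?thesis using h by (metis minus_minus)
  qed
  have Y2: "pochhammer (n - 1 + (a+1)) j = pochhammer (n+a) j" by (simp add: algebra_simps)
  have PB: "pochhammer (b+1) j = (b + of_nat j) * pochhammer b j / b"
    using pochhammer_rec[of b j] pochhammer_rec'[of b j] b0 by (simp add: field_simps)
  have PC: "pochhammer (c+1) j = (c + of_nat j) * pochhammer c j / c"
    using pochhammer_rec[of c j] pochhammer_rec'[of c j] c0 by (simp add: field_simps)
  define J where "J = (of_nat j :: complex)"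
  define K where "K = (of_nat k :: complex)"
  define Bj where "Bj = b + J"
  define Cj where "Cj = c + J"
  define C where "C = pochhammer (-n) j * pochhammer (n+a) j * pochhammer (- of_nat k) j * b * c
      / (fact j * pochhammer b j * pochhammer c j * Bj * Cj * K)"
  define u where "u = pochhammer (-n) j * pochhammer (n + (a+1)) j * pochhammer (- of_nat (k-1)) j
        / (fact j * pochhammer (b+1) j * pochhammer (c+1) j)"
  define v where "v = pochhammer (-(n-1)) j * pochhammer (n - 1 + (a+1)) j * pochhammer (- of_nat (k-1)) j
        / (fact j * pochhammer (b+1) j * pochhammer (c+1) j)"
  have kK: "K \<noteq> 0" using kk K_def by simp
  have bj': "Bj \<noteq> 0" using bj Bj_def J_def by simp
  have cj': "Cj \<noteq> 0" using cj Cj_def J_def by simp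
  have PB': "pochhammer (b+1) j = Bj * pochhammer b j / b" using PB Bj_def J_def by simp
  have PC': "pochhammer (c+1) j = Cj * pochhammer c j / c" using PC Cj_def J_def by simp
  have Z': "pochhammer (- of_nat (k-1)) j = - pochhammer (- of_nat k) j * (J - K) / K"
    using Z J_def K_def by simp
  have E1: "(2*n+a)*b*c*t j = C * ((2*n+a)*Bj*Cj*K)"
    unfolding t_def C_def using kK bj' cj' b0 c0 pb pc f0 by (simp add: field_simps)
  have E2: "(n+a) * u = C * (-(n+a+J)*(J-K))"
  proof -
    have "(n+a) * u = pochhammer (-n) j * ((n+a) * pochhammer (n + (a+1)) j) * pochhammer (- of_nat (k-1)) j
        / (fact j * pochhammer (b+1) j * pochhammer (c+1) j)" unfolding u_def by (simp add: ac_simps)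
    also have "\<dots> = C * (-(n+a+J)*(J-K))"
      unfolding X PB' PC' Z' C_def J_def[symmetric]
      using kK bj' cj' b0 c0 pb pc f0 by (simp add: field_simps)
    finally show ?thesis .
  qed
  have E3: "n * v = C * ((-n+J)*(J-K))"
  proof -
    have "n * v = (n * pochhammer (-(n-1)) j) * pochhammer (n+a) j * pochhammer (- of_nat (k-1)) j
        / (fact j * pochhammer (b+1) j * pochhammer (c+1) j)" unfolding v_def Y2 by (simp add: ac_simps)
    also have "\<dots> = C * ((-n+J)*(J-K))"
      unfolding Y PB' PC' Z' C_def J_def[symmetric]
      using kK bj' cj' b0 c0 pb pc f0 by (simp add: field_simps)
    finally show ?thesis .
  qed
  have tS2: "of_nat (Suc j) * t (Suc j) = pochhammer (-n) j * (-n + of_nat j) * (pochhammer (n+a) j * (n+a+of_nat j)) * (pochhammer (- of_nat k) j * (- of_nat k + of_nat j))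
        / (fact j * (pochhammer b j * (b + of_nat j)) * (pochhammer c j * (c + of_nat j)))"
  proof -
    have "t (Suc j) = pochhammer (-n) j * (-n + of_nat j) * (pochhammer (n+a) j * (n+a+of_nat j)) * (pochhammer (- of_nat k) j * (- of_nat k + of_nat j))
        / (of_nat (Suc j) * (fact j * (pochhammer b j * (b + of_nat j)) * (pochhammer c j * (c + of_nat j))))"
      unfolding t_def by (simp add: pochhammer_rec' ac_simps)
    then show ?thesis by (simp del: of_nat_Suc)
  qed
  have G4: "G (Suc j) = -(2*n+a)*b*c*(of_nat (Suc j) * t (Suc j)) / K"
    unfolding G_def K_def by (simp add: algebra_simps)
  have E4: "G (Suc j) = C * (-(2*n+a)*(-n+J)*(n+a+J)*(J-K))"
    unfolding G4 tS2 C_def J_def[symmetric] K_def[symmetric] Bj_def[symmetric] Cj_def[symmetric]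
    using kK bj' cj' b0 c0 pb pc f0 by (simp add: field_simps)
  have E5: "G j = C * (-J*(2*n+a)*Bj*Cj)"
    unfolding G_def t_def C_def J_def[symmetric] K_def[symmetric]
    using kK bj' cj' b0 c0 pb pc f0 by (simp add: field_simps)
  have poly: "(2*n+a)*Bj*Cj*K - (n+b)*(n+c)*(-(n+a+J)*(J-K)) - (n+a-b)*(n+a-c)*((-n+J)*(J-K))
      = (-(2*n+a)*(-n+J)*(n+a+J)*(J-K)) - (-J*(2*n+a)*Bj*Cj)"
    unfolding Bj_def Cj_def by (simp add: algebra_simps)
  have "(2*n+a)*b*c* t j - (n + b) * (n + c) * ((n+a) * u) - (n + a - b) * (n + a - c) * (n * v) = G (Suc j) - G j"
    unfolding E1 E2 E3 E4 E5 using poly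
    by (metis (no_types, lifting) right_diff_distrib mult.left_commute)
  then show ?thesis unfolding u_def[symmetric] v_def[symmetric] by (simp add: algebra_simps)
qed

theorem mainTheorem14:
  fixes k :: nat and n a b c :: complex
  assumes "k \<ge> 1"
    and "a \<noteq> 0"
    and "\<And>m::nat. b \<noteq> - of_nat m"
    and "\<And>m::nat. c \<noteq> - of_nat m"
  shows "a * b * c * ((n + a / 2) / (a / 2)) * Q2 k n a b c
       = (n + a) * (n + b) * (n + c) * Q2 (k - 1) n (a + 1) (b + 1) (c + 1)
         + n * (n + a - b) * (n + a - c) * Q2 (k - 1) (n - 1) (a + 1) (b + 1) (c + 1)"
proof -
  obtain m where km: "k = Suc m" using assms(1) by (cases k) auto
  define t where "t \<equiv> \<lambda>j. pochhammer (-n) j * pochhammer (n + a) j * pochhammer (- of_nat k) j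
        / (fact j * pochhammer b j * pochhammer c j)"
  define G where "G \<equiv> \<lambda>j. - (of_nat j) * (2*n+a) * b * c * t j / of_nat k"
  define u where "u \<equiv> \<lambda>j. pochhammer (-n) j * pochhammer (n + (a+1)) j * pochhammer (- of_nat (k-1)) j
        / (fact j * pochhammer (b+1) j * pochhammer (c+1) j)"
  define v where "v \<equiv> \<lambda>j. pochhammer (-(n-1)) j * pochhammer (n - 1 + (a+1)) j * pochhammer (- of_nat (k-1)) j
        / (fact j * pochhammer (b+1) j * pochhammer (c+1) j)"
  have step: "(2*n+a)*b*c* t j - (n + a) * (n + b) * (n + c) * u j - n * (n + a - b) * (n + a - c) * v j
     = G (Suc j) - G j" for j
    unfolding u_def v_def t_def G_def
    using key_step[of k b c n a j, OF assms(1) assms(3) assms(4)] by simp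
  have Qk: "Q2 k n a b c = sum t {0..k}" unfolding Q2_def t_def by simp
  have u0: "u k = 0" unfolding u_def by (simp add: pochhammer_of_nat_eq_0_iff km)
  have v0: "v k = 0" unfolding v_def by (simp add: pochhammer_of_nat_eq_0_iff km)
  have Qu: "Q2 (k-1) n (a+1) (b+1) (c+1) = sum u {0..k}"
  proof -
    have "sum u {0..k} = sum u {0..m} + u k" by (simp add: km)
    also have "\<dots> = sum u {0..m}" using u0 by simp
    finally show ?thesis by (simp add: Q2_def u_def km)
  qed
  have Qv: "Q2 (k-1) (n-1) (a+1) (b+1) (c+1) = sum v {0..k}"
  proof -
    have "sum v {0..k} = sum v {0..m} + v k" by (simp add: km)
    also have "\<dots> = sum v {0..m}" using v0 by simp
    finally show ?thesis by (simp add: Q2_def v_def km)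
  qed
  have tk: "t (Suc k) = 0" unfolding t_def by (simp add: pochhammer_of_nat_eq_0_iff)
  have tele: "(\<Sum>j=0..k. (2*n+a)*b*c* t j - (n + a) * (n + b) * (n + c) * u j - n * (n + a - b) * (n + a - c) * v j) = 0"
    unfolding step using sum_Suc_diff[of 0 k G] tk by (simp add: G_def)
  have L: "a * b * c * ((n + a / 2) / (a / 2)) = (2*n+a)*b*c" using assms(2) by (simp add: field_simps)
  show ?thesis
  proof -
    have "(2*n+a)*b*c * sum t {0..k} - (n + a) * (n + b) * (n + c) * sum u {0..k}
        - n * (n + a - b) * (n + a - c) * sum v {0..k} = 0"
      using tele by (simp only: sum_subtractf sum_distrib_left)
    then show ?thesis unfolding L Qk Qu Qv by (simp add: algebra_simps)
  qed
qed

end
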